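(* Let a quantum system be given, i.e. a finite-dimensional complex Hilbert space $\mathcal{H}$ together with sets $\mathcal{P},\mathcal{M},\mathcal{T}$ of preparations, measurements and transformations, where every density operator on $\mathcal{H}$ represents some preparation and every self-adjoint operator on $\mathcal{H}$ represents some measurement. Then every ontic model for this quantum system that is $\psi$-complete is also $\psi$-ontic.
   Context: A quantum system consists of a finite-dimensional Hilbert space $\mathcal{H}$ and sets $\mathcal{P}$ (preparations), $\mathcal{M}$ (measurements), $\mathcal{T}$ (transformations), together with surjective (possibly many-to-one) maps assigning to each $P\in\mathcal{P}$ a density operator $\rho$ on $\mathcal{H}$, to each $M\in\mathcal{M}$ a self-adjoint operator $A$ on $\mathcal{H}$ (a projection-valued measurement), and to each $T\in\mathcal{T}$ a unitary $U$ on $\mathcal{H}$; we write $P_\rho, M_A, T_U$. For an eigenvalue $a$ of $A$, $[a]_A$ denotes the projection onto the corresponding eigenspace; the quantum probability of outcome $a$ is $\mathrm{Tr}(U\rho U^*[a]_A)$. For a unit vector $\psi$, $[\psi]$ is the projection onto its span; a pure state is $\rho=[\psi]$. An ontic model for the system consists of a measurable space $(\Lambda,\Sigma)$; for each $M\in\mathcal{M}$ a Markov kernel $p_M$ (response function) assigning to each $\lambda\in\Lambda$ a probability distribution $p_M(\cdot|\lambda)$ on the eigenvalues of the operator representing $M$; for each $P\in\mathcal{P}$ a probability measure $\mu_P$ on $(\Lambda,\Sigma)$; for each $T\in\mathcal{T}$ a Markov kernel $\gamma_T$ from $(\Lambda,\Sigma)$ to itself; such that for all $P_\rho,M_A,T_U$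 and eigenvalues $a$: $\int p_{M_A}(a|\lambda)\,d\mu_{P_\rho}(\lambda)=\mathrm{Tr}(\rho[a]_A)$ and $\iint p_{M_A}(a|\lambda)\gamma_{T_U}(d\lambda|\tilde\lambda)\,d\mu_{P_\rho}(\tilde\lambda)=\mathrm{Tr}(U\rho U^*[a]_A)$. The ontic model is trivial with respect to $\mathcal{M}'\subset\mathcal{M}$ and $\mathcal{P}'\subset\mathcal{P}$ if for every $P_\rho\in\mathcal{P}'$, every $M_A\in\mathcal{M}'$ and every eigenvalue $a$ of $A$, $\int|p_{M_A}(a|\lambda)-\mathrm{Tr}(\rho[a]_A)|\,d\mu_{P_\rho}(\lambda)=0$. It is $\psi$-complete if it is trivial with respect to all of $\mathcal{M}$ and $\mathcal{P}$. The ontic model is $\psi$-ontic if for any two preparations $P_1,P_2$ represented by distinct pure quantum states, $\sup_{\Delta\in\Sigma}|\mu_{P_1}(\Delta)-\mu_{P_2}(\Delta)|=1$. *)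

theory Defs
  imports "HOL-Analysis.Analysis" "HOL-Probability.Probability"
begin

text \<open>The Hilbert space is complex^'n (finite-dimensional, 'n a finite index type);
 operators are complex matrices complex^'n^'n acting via *v.\<close>

type_synonym 'n cmat = "complex^'n^'n"

definition cinner :: "complex^('n::finite) \<Rightarrow> complex^'n \<Rightarrow> complex" where
  "cinner v w = (\<Sum>i\<in>UNIV. cnj (v $ i) * w $ i)"

definition adj :: "('n::finite) cmat \<Rightarrow> ('n::finite) cmat" where
  "adj M = (\<chi> i j. cnj (M $ j $ i))"

definition self_adjoint :: "('n::finite) cmat \<Rightarrow> bool" where
  "self_adjoint M \<longleftrightarrow> adj M = M"

definition unitary_op :: "('n::finite) cmat \<Rightarrow> bool" where
  "unitary_op U \<longleftrightarrow> U ** adj U = mat 1 \<and> adj U ** U = mat 1"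

definition positive_op :: "('n::finite) cmat \<Rightarrow> bool" where
  "positive_op M \<longleftrightarrow> (\<forall>v. Im (cinner v (M *v v)) = 0 \<and> Re (cinner v (M *v v)) \<ge> 0)"

definition density_op :: "('n::finite) cmat \<Rightarrow> bool" where
  "density_op \<rho> \<longleftrightarrow> self_adjoint \<rho> \<and> positive_op \<rho> \<and> trace \<rho> = 1"

definition proj_onto :: "(complex^('n::finite)) set \<Rightarrow> ('n::finite) cmat" where
  "proj_onto S = (THE P. P ** P = P \<and> adj P = P \<and> range (\<lambda>v. P *v v) = S)"

definition eigenvalues :: "('n::finite) cmat \<Rightarrow> complex set" where
  "eigenvalues A = {a. \<exists>v. v \<noteq> 0 \<and> A *v v = a *s v}"

definition eigproj :: "('n::finite) cmat \<Rightarrow> complex \<Rightarrow> ('n::finite) cmat" where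
  "eigproj A a = proj_onto {v. A *v v = a *s v}"

definition ket_proj :: "complex^('n::finite) \<Rightarrow> ('n::finite) cmat" where
  "ket_proj \<psi> = proj_onto {c *s \<psi> | c. True}"

definition pure_state :: "('n::finite) cmat \<Rightarrow> bool" where
  "pure_state \<rho> \<longleftrightarrow> (\<exists>\<psi>. cinner \<psi> \<psi> = 1 \<and> \<rho> = ket_proj \<psi>)"

definition quantum_system ::
  "'p set \<Rightarrow> 'm set \<Rightarrow> 't set \<Rightarrow> ('p \<Rightarrow> ('n::finite) cmat) \<Rightarrow> ('m \<Rightarrow> ('n::finite) cmat) \<Rightarrow> ('t \<Rightarrow> ('n::finite) cmat) \<Rightarrow> bool" where
  "quantum_system Ps Ms Ts rho A U \<longleftrightarrow>
     (\<forall>P\<in>Ps. density_op (rho P)) \<and> (\<forall>M\<in>Ms. self_adjoint (A M)) \<and> (\<forall>T\<in>Ts. unitary_op (U T))"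

text \<open>Ontic model on the measurable space L (= (Lambda, Sigma)).
 p M a l = p_M(a|l); mu P = mu_P; gamma T l = gamma_T(.|l).\<close>
definition ontic_model ::
  "'l measure \<Rightarrow> 'p set \<Rightarrow> 'm set \<Rightarrow> 't set \<Rightarrow> ('p \<Rightarrow> ('n::finite) cmat) \<Rightarrow> ('m \<Rightarrow> ('n::finite) cmat) \<Rightarrow> ('t \<Rightarrow> ('n::finite) cmat)
   \<Rightarrow> ('m \<Rightarrow> complex \<Rightarrow> 'l \<Rightarrow> real) \<Rightarrow> ('p \<Rightarrow> 'l measure) \<Rightarrow> ('t \<Rightarrow> 'l \<Rightarrow> 'l measure) \<Rightarrow> bool" where
  "ontic_model L Ps Ms Ts rho A U p mu gamma \<longleftrightarrow>
     (\<forall>M\<in>Ms. \<forall>a\<in>eigenvalues (A M). p M a \<in> borel_measurable L) \<and>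
     (\<forall>M\<in>Ms. \<forall>a\<in>eigenvalues (A M). \<forall>l\<in>space L. 0 \<le> p M a l) \<and>
     (\<forall>M\<in>Ms. \<forall>l\<in>space L. (\<Sum>a\<in>eigenvalues (A M). p M a l) = 1) \<and>
     (\<forall>P\<in>Ps. prob_space (mu P) \<and> sets (mu P) = sets L) \<and>
     (\<forall>T\<in>Ts. gamma T \<in> measurable L (prob_algebra L)) \<and>
     (\<forall>P\<in>Ps. \<forall>M\<in>Ms. \<forall>a\<in>eigenvalues (A M).
        complex_of_real (\<integral>l. p M a l \<partial>mu P) = trace (rho P ** eigproj (A M) a)) \<and>
     (\<forall>P\<in>Ps. \<forall>M\<in>Ms. \<forall>T\<in>Ts. \<forall>a\<in>eigenvalues (A M).
        complex_of_real (\<integral>l'. (\<integral>l. p M a l \<partial>gamma T l') \<partial>mu P)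
          = trace (U T ** rho P ** adj (U T) ** eigproj (A M) a))"

definition trivial_wrt ::
  "'m set \<Rightarrow> 'p set \<Rightarrow> ('p \<Rightarrow> ('n::finite) cmat) \<Rightarrow> ('m \<Rightarrow> ('n::finite) cmat)
   \<Rightarrow> ('m \<Rightarrow> complex \<Rightarrow> 'l \<Rightarrow> real) \<Rightarrow> ('p \<Rightarrow> 'l measure) \<Rightarrow> bool" where
  "trivial_wrt Ms' Ps' rho A p mu \<longleftrightarrow>
     (\<forall>P\<in>Ps'. \<forall>M\<in>Ms'. \<forall>a\<in>eigenvalues (A M).
        (\<integral>l. cmod (complex_of_real (p M a l) - trace (rho P ** eigproj (A M) a)) \<partial>mu P) = 0)"

definition psi_complete where
  "psi_complete Ps Ms rho A p mu \<longleftrightarrow> trivial_wrt Ms Ps rho A p mu"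

definition psi_ontic ::
  "'l measure \<Rightarrow> 'p set \<Rightarrow> ('p \<Rightarrow> ('n::finite) cmat) \<Rightarrow> ('p \<Rightarrow> 'l measure) \<Rightarrow> bool" where
  "psi_ontic L Ps rho mu \<longleftrightarrow>
     (\<forall>P1\<in>Ps. \<forall>P2\<in>Ps. pure_state (rho P1) \<and> pure_state (rho P2) \<and> rho P1 \<noteq> rho P2 \<longrightarrow>
        (SUP D\<in>sets L. \<bar>measure (mu P1) D - measure (mu P2) D\<bar>) = 1)"

end

theory Submission
  imports Defs
begin


lemma adj_mult: "adj (X ** Y) = adj Y ** adj (X::('n::finite) cmat)"
  by (simp add: adj_def matrix_matrix_mult_def vec_eq_iff mult.commute)

lemma proj_unique:
  fixes P Q :: "('n::finite) cmat"
  assumes "P ** P = P" "adj P = P" "Q ** Q = Q" "adj Q = Q"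
    and "range (\<lambda>v. P *v v) = range (\<lambda>v. Q *v v)"
  shows "P = Q"
proof -
  have fix1: "X ** Y = Y" if h1: "X ** X = X" and h2: "range (\<lambda>v. Y *v v) \<subseteq> range (\<lambda>v. X *v v)"
    for X Y :: "'n cmat"
  proof -
    have "X *v (Y *v v) = Y *v v" for v
    proof -
      obtain w where "Y *v v = X *v w" using h2 by blast
      then show ?thesis using h1 by (simp add: matrix_vector_mul_assoc)
    qed
    then show ?thesis by (simp add: matrix_eq matrix_vector_mul_assoc)
  qed
  have "Q ** P = P" using fix1 assms by simp
  then have "P = P ** Q" using assms adj_mult by metis
  moreover have "P ** Q = Q" using fix1 assms by simp
  ultimately show ?thesis by simp
qed

lemma proj_onto_eq:
  fixes P :: "('n::finite) cmat"
  assumes "P ** P = P" "adj P = P"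
  shows "proj_onto (range (\<lambda>v. P *v v)) = P"
  unfolding proj_onto_def
  by (rule the_equality) (use assms proj_unique in auto)

definition K :: "complex^('n::finite) \<Rightarrow> 'n cmat" where
  "K \<psi> = (\<chi> i j. \<psi>$i * cnj (\<psi>$j))"

lemma K_apply: "K \<psi> *v v = cinner \<psi> v *s \<psi>"
  by (simp add: K_def matrix_vector_mult_def cinner_def vec_eq_iff sum_distrib_left mult_ac)

lemma K_sq: assumes "cinner \<psi> \<psi> = 1" shows "K \<psi> ** K \<psi> = K \<psi>"
proof -
  have "(K \<psi> ** K \<psi>) $ i $ j = \<psi>$i * cnj (\<psi>$j) * cinner \<psi> \<psi>" for i j
    by (simp add: K_def matrix_matrix_mult_def cinner_def sum_distrib_left mult_ac)
  then show ?thesis using assms by (simp add: vec_eq_iff K_def)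
qed

lemma K_adj: "adj (K \<psi>) = K \<psi>"
  by (simp add: K_def adj_def vec_eq_iff mult.commute)

lemma K_range: assumes "cinner \<psi> \<psi> = 1"
  shows "range (\<lambda>v. K \<psi> *v v) = {c *s \<psi> | c. True}"
proof (intro set_eqI iffI)
  fix x assume "x \<in> range (\<lambda>v. K \<psi> *v v)"
  then show "x \<in> {c *s \<psi> | c. True}" by (auto simp: K_apply)
next
  fix x assume "x \<in> {c *s \<psi> | c. True}"
  then obtain c where c: "x = c *s \<psi>" by auto
  have "cinner \<psi> (c *s \<psi>) = c * cinner \<psi> \<psi>"
    by (simp add: cinner_def sum_distrib_left mult_ac)
  then have "K \<psi> *v (c *s \<psi>) = x" using assms c by (simp add: K_apply)
  then show "x \<in> range (\<lambda>v. K \<psi> *v v)" by (metis rangeI)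
qed

lemma ket_proj_K: assumes "cinner \<psi> \<psi> = 1" shows "ket_proj \<psi> = K \<psi>"
  using proj_onto_eq[OF K_sq[OF assms] K_adj] K_range[OF assms]
  by (simp add: ket_proj_def)

lemma trace_K: "trace (K \<psi>) = cinner \<psi> \<psi>"
  by (simp add: trace_def K_def cinner_def mult.commute)

lemma eig1: 
  fixes P :: "('n::finite) cmat"
  assumes "P ** P = P" "adj P = P"
  shows "eigproj P 1 = P"
proof -
  have "{v. P *v v = 1 *s v} = range (\<lambda>v. P *v v)"
  proof (intro set_eqI iffI)
    fix x show "x \<in> {v. P *v v = 1 *s v} \<Longrightarrow> x \<in> range (\<lambda>v. P *v v)"
    proof -
      assume "x \<in> {v. P *v v = 1 *s v}"
      then have "P *v x = x" by simp
      then show ?thesis by (metis rangeI)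
    qed
  next
    fix x assume "x \<in> range (\<lambda>v. P *v v)"
    then obtain w where "x = P *v w" by auto
    then have "P *v x = x" using assms(1) by (simp add: matrix_vector_mul_assoc)
    then show "x \<in> {v. P *v v = 1 *s v}" by simp
  qed
  then show ?thesis unfolding eigproj_def using proj_onto_eq[OF assms] by simp
qed

lemma trace_sq_zero:
  fixes X :: "('n::finite) cmat"
  assumes "adj X = X" "trace (X ** X) = 0"
  shows "X = 0"
proof -
  have sym: "X $ k $ i = cnj (X $ i $ k)" for i k
  proof -
    have "cnj (X $ k $ i) = X $ i $ k"
      using arg_cong[OF assms(1), of "\<lambda>M. M $ i $ k"] by (simp add: adj_def)
    then show ?thesis by (metis complex_cnj_cnj)
  qed
  have "trace (X ** X) = (\<Sum>i\<in>UNIV. \<Sum>k\<in>UNIV. X$i$k * X$k$i)"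
    by (simp add: trace_def matrix_matrix_mult_def)
  also have "\<dots> = (\<Sum>i\<in>UNIV. \<Sum>k\<in>UNIV. X$i$k * cnj (X$i$k))"
    by (intro sum.cong refl) (metis sym)
  also have "\<dots> = complex_of_real (\<Sum>i\<in>UNIV. \<Sum>k\<in>UNIV. (cmod (X$i$k))^2)"
    by (simp only: of_real_sum complex_norm_square)
  finally have h: "trace (X ** X) = complex_of_real (\<Sum>i\<in>UNIV. \<Sum>k\<in>UNIV. (cmod (X$i$k))^2)" .
  have "complex_of_real (\<Sum>i\<in>UNIV. \<Sum>k\<in>UNIV. (cmod (X$i$k))^2) = 0" using h assms(2) by metis
  then have "(\<Sum>i\<in>UNIV. \<Sum>k\<in>UNIV. (cmod (X$i$k))^2) = 0" by (simp only: of_real_eq_0_iff)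
  then have S0: "\<forall>i\<in>UNIV. (\<Sum>k\<in>UNIV. (cmod (X$i$k))^2) = 0"
    by (subst (asm) sum_nonneg_eq_0_iff[OF finite]) (simp_all add: sum_nonneg)
  have "X $ i $ k = 0" for i k
  proof -
    have "(\<Sum>k\<in>UNIV. (cmod (X$i$k))^2) = 0" using S0 by blast
    then have "\<forall>k\<in>UNIV. (cmod (X$i$k))^2 = 0"
      by (subst (asm) sum_nonneg_eq_0_iff[OF finite]) simp_all
    then show ?thesis by simp
  qed
  then show ?thesis by (simp add: vec_eq_iff)
qed

lemma mdiff_l: "((A::('n::finite) cmat) - B) ** C = A ** C - B ** C"
  by (simp add: matrix_matrix_mult_def vec_eq_iff sum_subtractf algebra_simps)

lemma mdiff_r: "(C::('n::finite) cmat) ** (A - B) = C ** A - C ** B"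
  by (simp add: matrix_matrix_mult_def vec_eq_iff sum_subtractf algebra_simps)

lemma proj_trace_eq:
  fixes P Q :: "('n::finite) cmat"
  assumes "P ** P = P" "adj P = P" "Q ** Q = Q" "adj Q = Q" "trace P = 1" "trace Q = 1"
    and "trace (Q ** P) = 1"
  shows "P = Q"
proof -
  have a: "adj (P - Q) = P - Q" using assms by (simp add: adj_def vec_eq_iff)
  have "(P - Q) ** (P - Q) = P ** P - P ** Q - Q ** P + Q ** Q"
    by (simp add: mdiff_l mdiff_r)
  then have "trace ((P - Q) ** (P - Q)) = 0"
    using assms by (simp add: trace_add trace_sub trace_mul_sym[of P Q])
  then show ?thesis using trace_sq_zero[OF a] by simp
qed


lemma ae_lemma:
  fixes f :: "'l \<Rightarrow> real" and N L :: "'l measure"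
  assumes ps: "prob_space N" and sN: "sets N = sets L" and fm: "f \<in> borel_measurable L"
    and b: "\<forall>l\<in>space L. 0 \<le> f l \<and> f l \<le> 1"
    and z: "(\<integral>l. cmod (complex_of_real (f l) - t) \<partial>N) = 0"
  shows "measure N {l\<in>space L. f l = 1} = (if t = 1 then 1 else 0)"
proof -
  interpret prob_space N by fact
  have sp: "space N = space L" using sN by (rule sets_eq_imp_space_eq)
  have fmN[measurable]: "f \<in> borel_measurable N" unfolding measurable_cong_sets[OF sN refl] by (rule fm)
  have gm: "(\<lambda>l. cmod (complex_of_real (f l) - t)) \<in> borel_measurable N" by measurable
  have bd: "AE l in N. norm (cmod (complex_of_real (f l) - t)) \<le> 1 + cmod t"
  proof (rule AE_I2)
    fix l assume "l \<in> space N"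
    then have "0 \<le> f l" "f l \<le> 1" using b sp by auto
    then have "cmod (complex_of_real (f l)) \<le> 1" by simp
    then show "norm (cmod (complex_of_real (f l) - t)) \<le> 1 + cmod t"
      using norm_triangle_ineq4[of "complex_of_real (f l)" t] by simp
  qed
  have int: "integrable N (\<lambda>l. cmod (complex_of_real (f l) - t))"
    by (rule integrable_const_bound[OF bd gm])
  have "AE l in N. cmod (complex_of_real (f l) - t) = 0"
    using integral_nonneg_eq_0_iff_AE[OF int] z by simp
  then have ae2: "AE l in N. complex_of_real (f l) = t" by eventually_elim simp
  have Dm: "{l\<in>space L. f l = 1} \<in> sets N"
    unfolding sN[symmetric] sp[symmetric] by measurable
  show ?thesis
  proof (cases "t = 1")
    case True
    have "AE l in N. l \<in> {l\<in>space L. f l = 1}"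
      using ae2 AE_space by eventually_elim (use True sp in auto)
    then show ?thesis using AE_in_set_eq_1[OF Dm] True by simp
  next
    case False
    have "AE l in N. l \<notin> {l\<in>space L. f l = 1}"
      using ae2 by eventually_elim (use False in auto)
    then show ?thesis using prob_eq_0[OF Dm] False by simp
  qed
qed

theorem proposition1:
  fixes L :: "'l measure" and Ps :: "'p set" and Ms :: "'m set" and Ts :: "'t set"
    and rho :: "'p \<Rightarrow> ('n::finite) cmat" and A :: "'m \<Rightarrow> 'n cmat" and U :: "'t \<Rightarrow> 'n cmat"
    and p :: "'m \<Rightarrow> complex \<Rightarrow> 'l \<Rightarrow> real" and mu :: "'p \<Rightarrow> 'l measure"
    and gamma :: "'t \<Rightarrow> 'l \<Rightarrow> 'l measure"
  assumes "quantum_system Ps Ms Ts rho A U"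
    and "{\<rho>. density_op \<rho>} \<subseteq> rho ` Ps"
    and "{X. self_adjoint X} \<subseteq> A ` Ms"
    and "ontic_model L Ps Ms Ts rho A U p mu gamma"
    and "psi_complete Ps Ms rho A p mu"
  shows "psi_ontic L Ps rho mu"
  unfolding psi_ontic_def
proof (intro ballI impI)
  fix X1 X2 assume X1: "X1 \<in> Ps" and X2: "X2 \<in> Ps"
    and h: "pure_state (rho X1) \<and> pure_state (rho X2) \<and> rho X1 \<noteq> rho X2"
  obtain \<psi>1 where p1: "cinner \<psi>1 \<psi>1 = 1" "rho X1 = K \<psi>1"
    using h ket_proj_K unfolding pure_state_def by metis
  obtain \<psi>2 where p2: "cinner \<psi>2 \<psi>2 = 1" "rho X2 = K \<psi>2"
    using h ket_proj_K unfolding pure_state_def by metis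
  define R1 where "R1 = K \<psi>1"
  define R2 where "R2 = K \<psi>2"
  have R1: "R1 ** R1 = R1" "adj R1 = R1" "trace R1 = 1"
    using K_sq[OF p1(1)] p1(1) by (auto simp: R1_def K_adj trace_K)
  have R2: "R2 ** R2 = R2" "adj R2 = R2" "trace R2 = 1"
    using K_sq[OF p2(1)] p2(1) by (auto simp: R2_def K_adj trace_K)
  have ne: "R1 \<noteq> R2" using h p1 p2 by (simp add: R1_def R2_def)
  obtain M where M: "M \<in> Ms" "A M = R1"
    using assms(3) R1(2) unfolding self_adjoint_def by blast
  have "\<psi>1 \<noteq> 0" using p1(1) by (auto simp: cinner_def)
  moreover have "R1 *v \<psi>1 = 1 *s \<psi>1" using p1(1) by (simp add: R1_def K_apply)
  ultimately have eig: "1 \<in> eigenvalues (A M)" using M(2) unfolding eigenvalues_def by blast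
  have ep: "eigproj (A M) 1 = R1" using eig1[OF R1(1,2)] M(2) by simp
  define f where "f = p M 1"
  have om: "\<forall>M\<in>Ms. \<forall>a\<in>eigenvalues (A M). p M a \<in> borel_measurable L"
     "\<forall>M\<in>Ms. \<forall>a\<in>eigenvalues (A M). \<forall>l\<in>space L. 0 \<le> p M a l"
     "\<forall>M\<in>Ms. \<forall>l\<in>space L. (\<Sum>a\<in>eigenvalues (A M). p M a l) = 1"
     "\<forall>P\<in>Ps. prob_space (mu P) \<and> sets (mu P) = sets L"
    using assms(4) unfolding ontic_model_def by blast+
  have fm: "f \<in> borel_measurable L" using om(1) M(1) eig by (simp add: f_def)
  have ps1: "prob_space (mu X1)" "sets (mu X1) = sets L" using om(4) X1 by auto
  have ps2: "prob_space (mu X2)" "sets (mu X2) = sets L" using om(4) X2 by auto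
  have "space L \<noteq> {}"
    using prob_space.not_empty[OF ps1(1)] sets_eq_imp_space_eq[OF ps1(2)] by simp
  then obtain l0 where l0: "l0 \<in> space L" by blast
  have "(\<Sum>a\<in>eigenvalues (A M). p M a l0) = 1" using om(3) M(1) l0 by blast
  then have fin: "finite (eigenvalues (A M))" by (metis sum.infinite zero_neq_one)
  have b: "\<forall>l\<in>space L. 0 \<le> f l \<and> f l \<le> 1"
  proof
    fix l assume l: "l \<in> space L"
    have "f l \<le> (\<Sum>a\<in>eigenvalues (A M). p M a l)"
      unfolding f_def by (rule member_le_sum[OF eig _ fin]) (use om(2) M(1) l in blast)
    then show "0 \<le> f l \<and> f l \<le> 1" using om(2,3) M(1) l eig by (auto simp: f_def)
  qed
  have tr: "\<forall>P\<in>Ps. \<forall>M\<in>Ms. \<forall>a\<in>eigenvalues (A M).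
        (\<integral>l. cmod (complex_of_real (p M a l) - trace (rho P ** eigproj (A M) a)) \<partial>mu P) = 0"
    using assms(5) unfolding psi_complete_def trivial_wrt_def by blast
  have z1: "(\<integral>l. cmod (complex_of_real (f l) - trace (R1 ** R1)) \<partial>mu X1) = 0"
    using tr[rule_format, OF X1 M(1) eig] ep p1(2) by (simp add: f_def R1_def)
  have z2: "(\<integral>l. cmod (complex_of_real (f l) - trace (R2 ** R1)) \<partial>mu X2) = 0"
    using tr[rule_format, OF X2 M(1) eig] ep p2(2) by (simp add: f_def R1_def R2_def)
  have t1: "trace (R1 ** R1) = 1" using R1 by simp
  have t2: "trace (R2 ** R1) \<noteq> 1" using proj_trace_eq[OF R1(1,2) R2(1,2) R1(3) R2(3)] ne by blast
  define D where "D = {l\<in>space L. f l = 1}"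
  have m1: "measure (mu X1) D = 1" using ae_lemma[OF ps1 fm b z1] t1 by (simp add: D_def)
  have m2: "measure (mu X2) D = 0" using ae_lemma[OF ps2 fm b z2] t2 by (simp add: D_def)
  have DL: "D \<in> sets L" unfolding D_def by (measurable; rule fm)?
  show "(SUP D\<in>sets L. \<bar>measure (mu X1) D - measure (mu X2) D\<bar>) = 1"
  proof (rule cSup_eq_maximum)
    show "1 \<in> (\<lambda>D. \<bar>measure (mu X1) D - measure (mu X2) D\<bar>) ` sets L"
      using DL m1 m2 by force
  next
    fix x assume "x \<in> (\<lambda>D. \<bar>measure (mu X1) D - measure (mu X2) D\<bar>) ` sets L"
    then obtain E where "x = \<bar>measure (mu X1) E - measure (mu X2) E\<bar>" by blast
    moreover have "measure (mu X1) E \<le> 1" "measure (mu X2) E \<le> 1"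
      using prob_space.prob_le_1[OF ps1(1)] prob_space.prob_le_1[OF ps2(1)] by auto
    moreover have "0 \<le> measure (mu X1) E" "0 \<le> measure (mu X2) E" by auto
    ultimately show "x \<le> 1" by linarith
  qed
qed

end
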